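(* Let $\lambda\ge\kappa=\mathrm{cf}(\kappa)>\aleph_0$ and let $k$ be an integer with $k\ge1$. Then the following three cardinals are equal: (a) $e(\lambda,\kappa)$; (b)$_k$ the minimal cardinality of a family $\mathcal F$ such that: (i) each $f\in\mathcal F$ is a partial function from $\lambda$ to $k=\{0,\dots,k-1\}$; (ii) $|\mathrm{Dom}(f)|=\aleph_0$ for $f\in\mathcal F$; (iii) for $f\in\mathcal F$ and $\ell<k$, $f^{-1}(\{\ell\})$ is infinite; (iv) whenever $A_0,\dots,A_{k-1}$ are pairwise disjoint subsets of $\lambda$ each of cardinality $\kappa$, there is $f\in\mathcal F$ such that $f^{-1}(\{\ell\})\cap A_\ell$ is infinite for every $\ell<k$; (c)$_k$ the minimal cardinality of a family $\mathcal F$ satisfying (i), (ii) and: (iii)$^+$ whenever $\langle\alpha_{\varepsilon,\ell}:\varepsilon<\kappa,\ell<k\rangle$ is a sequence of ordinals below $\lambda$ without repetitions, there is $f\in\mathcal F$ such that for infinitely many $\varepsilon<\kappa$, $f(\alpha_{\varepsilon,\ell})=\ell$ for every $\ell<k$ (in particular $\alpha_{\varepsilon,\ell}\in\mathrm{Dom}(f)$).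
   Context: $e(\lambda,\kappa)$ (denoted $\mathrm{ecf}_{\kappa,\aleph_0,\aleph_0}(\lambda)$ in the paper) is the least cardinality of a family $\mathcal P$ of countably infinite subsets of $\lambda$ such that for every $A\subseteq\lambda$ with $|A|=\kappa$ there is $a\in\mathcal P$ with $A\cap a$ infinite. *)

theory Defs
  imports Main "HOL-Library.Countable_Set"
begin

unbundle cardinal_syntax

text \<open>Cardinals lambda and kappa are represented by sets L and K of those cardinalities
  (only cardinalities matter).  Cardinal comparison uses the library's card_of orders.\<close>

definition mincard_is :: "'f set set \<Rightarrow> ('c \<times> 'c) set \<Rightarrow> bool" where
  "mincard_is S r \<longleftrightarrow> (\<exists>F\<in>S. |F| =o r) \<and> (\<forall>F\<in>S. r \<le>o |F| )"

definition ecf_family :: "'a set \<Rightarrow> 'b set \<Rightarrow> 'a set set \<Rightarrow> bool" where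
  "ecf_family L K P \<longleftrightarrow>
     (\<forall>a\<in>P. a \<subseteq> L \<and> countable a \<and> infinite a) \<and>
     (\<forall>A. A \<subseteq> L \<and> |A| =o |K| \<longrightarrow> (\<exists>a\<in>P. infinite (A \<inter> a)))"

definition partial_count_fun :: "'a set \<Rightarrow> nat \<Rightarrow> ('a \<Rightarrow> nat option) \<Rightarrow> bool" where
  "partial_count_fun L k f \<longleftrightarrow>
     dom f \<subseteq> L \<and> ran f \<subseteq> {..<k} \<and> countable (dom f) \<and> infinite (dom f)"

definition b_family :: "'a set \<Rightarrow> 'b set \<Rightarrow> nat \<Rightarrow> ('a \<Rightarrow> nat option) set \<Rightarrow> bool" where
  "b_family L K k F \<longleftrightarrow>
     (\<forall>f\<in>F. partial_count_fun L k f) \<and>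
     (\<forall>f\<in>F. \<forall>l<k. infinite {x. f x = Some l}) \<and>
     (\<forall>A :: nat \<Rightarrow> 'a set.
        (\<forall>l<k. A l \<subseteq> L \<and> |A l| =o |K| ) \<and>
        (\<forall>l<k. \<forall>m<k. l \<noteq> m \<longrightarrow> A l \<inter> A m = {}) \<longrightarrow>
        (\<exists>f\<in>F. \<forall>l<k. infinite ({x. f x = Some l} \<inter> A l)))"

definition c_family :: "'a set \<Rightarrow> 'b set \<Rightarrow> nat \<Rightarrow> ('a \<Rightarrow> nat option) set \<Rightarrow> bool" where
  "c_family L K k F \<longleftrightarrow>
     (\<forall>f\<in>F. partial_count_fun L k f) \<and>
     (\<forall>\<alpha> :: 'b \<Rightarrow> nat \<Rightarrow> 'a.
        (\<forall>e\<in>K. \<forall>l<k. \<alpha> e l \<in> L) \<and>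
        inj_on (\<lambda>(e, l). \<alpha> e l) (K \<times> {..<k}) \<longrightarrow>
        (\<exists>f\<in>F. infinite {e\<in>K. \<forall>l<k. f (\<alpha> e l) = Some l}))"

end

theory Submission
  imports Defs
begin

lemma countable_le_nat: "countable a \<Longrightarrow> |a| \<le>o |UNIV::nat set|"
  unfolding countable_def using card_of_ordLeq[of a "UNIV::nat set"] by auto
lemma le_nat_countable: "|a| \<le>o |UNIV::nat set| \<Longrightarrow> countable a"
  unfolding countable_def using card_of_ordLeq[of a "UNIV::nat set"] by auto
lemma uncountable_nat_less: "uncountable L \<Longrightarrow> |UNIV::nat set| <o |L|"
  using le_nat_countable[of L] not_ordLeq_iff_ordLess[OF card_of_Well_order card_of_Well_order] by blast
lemma uncountable_mono_card: "uncountable K \<Longrightarrow> |K| \<le>o |L| \<Longrightarrow> uncountable L"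
  using le_nat_countable[of K] countable_le_nat[of L] ordLeq_transitive by blast

lemma min_exists:
  assumes "S \<noteq> {}"
  shows "\<exists>F\<in>S. \<forall>G\<in>S. |F| \<le>o |G|"
proof -
  have "\<exists>r\<in>card_of ` S. \<forall>r'\<in>card_of ` S. r \<le>o r'"
    apply (rule exists_minim_Card_order)
    using assms apply simp
    using card_of_Card_order by auto
  then obtain F where "F \<in> S" "\<forall>r'\<in>card_of ` S. |F| \<le>o r'" by auto
  then show ?thesis by auto
qed

lemma ecf_big:
  assumes ecf: "ecf_family L K P" and unc: "uncountable K" and KL: "|K| \<le>o |L|"
  shows "|L| \<le>o |P|"
proof (rule ccontr)
  assume "\<not> |L| \<le>o |P|"
  hence PL: "|P| <o |L|" using not_ordLeq_iff_ordLess[OF card_of_Well_order card_of_Well_order] by auto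
  have uL: "uncountable L" using uncountable_mono_card unc KL by auto
  hence infL: "infinite L" using countable_finite by auto
  let ?U = "\<Union>P"
  have cnt: "\<forall>a\<in>P. |a| \<le>o |UNIV::nat set|" using ecf countable_le_nat unfolding ecf_family_def by auto
  have U1: "|?U| \<le>o |P \<times> (UNIV::nat set)|"
  proof -
    have "|\<Union>a\<in>P. a| \<le>o |SIGMA a:P. a|" by (rule card_of_UNION_Sigma)
    moreover have "|SIGMA a:P. a| \<le>o |SIGMA a:P. (UNIV::nat set)|"
      by (rule card_of_Sigma_mono1) (rule cnt)
    ultimately show ?thesis by (simp add: ordLeq_transitive)
  qed
  have U2: "|?U| <o |L|"
  proof (cases "finite P")
    case True
    hence "countable (P \<times> (UNIV::nat set))" by (simp add: countable_finite countable_SIGMA)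
    hence "|P \<times> (UNIV::nat set)| <o |L|"
      using countable_le_nat uncountable_nat_less[OF uL] ordLeq_ordLess_trans by auto
    then show ?thesis using U1 ordLeq_ordLess_trans by auto
  next
    case False
    hence "|P \<times> (UNIV::nat set)| =o |P|"
      using card_of_Times_infinite[of P "UNIV::nat set"] infinite_iff_card_of_nat[of P] by simp
    then show ?thesis using U1 PL ordLeq_ordIso_trans ordLeq_ordLess_trans by metis
  qed
  have "\<not> |L - ?U| <o |L|"
  proof
    assume "|L - ?U| <o |L|"
    hence "|(L - ?U) \<union> ?U| <o |L|" by (rule card_of_Un_ordLess_infinite[OF infL _ U2])
    moreover have "(L - ?U) \<union> ?U = L \<union> ?U" by auto
    moreover have "|L| \<le>o |L \<union> ?U|" by (rule card_of_mono1) auto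
    ultimately have "|L| <o |L|" using ordLeq_ordLess_trans by metis
    thus False using ordLess_irreflexive by auto
  qed
  hence "|L| \<le>o |L - ?U|" using not_ordLess_iff_ordLeq[OF card_of_Well_order card_of_Well_order] by auto
  hence "|K| \<le>o |L - ?U|" using KL ordLeq_transitive by auto
  then obtain g where g: "inj_on g K" "g ` K \<subseteq> L - ?U" using card_of_ordLeq[of K "L - ?U"] by auto
  have "bij_betw g K (g ` K)" using g(1) by (rule inj_on_imp_bij_betw)
  hence "|K| =o |g ` K|" using card_of_ordIso by auto
  hence "|g ` K| =o |K|" by (rule ordIso_symmetric)
  moreover have "g ` K \<subseteq> L" using g by auto
  ultimately obtain a where "a \<in> P" "infinite (g ` K \<inter> a)" using ecf unfolding ecf_family_def by auto
  moreover have "g ` K \<inter> a = {}" using g \<open>a \<in> P\<close> by auto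
  ultimately show False by simp
qed

lemma split_bij:
  fixes k :: nat
  assumes infK: "infinite K" and k: "k \<ge> 1" and A: "|A| =o |K|"
  shows "\<exists>g. bij_betw g (K \<times> {..<k}) A"
proof -
  have "0 \<in> {..<k}" using k by simp
  hence ne: "{..<k} \<noteq> {}" by blast
  have "|{..<k}| \<le>o |UNIV::nat set|" by (rule card_of_mono1) auto
  moreover have "|UNIV::nat set| \<le>o |K|" using infK infinite_iff_card_of_nat by auto
  ultimately have le: "|{..<k}| \<le>o |K|" by (rule ordLeq_transitive)
  have "|K \<times> {..<k}| =o |K|" using card_of_Times_infinite[OF infK ne le] by auto
  moreover have "|K| =o |A|" using A by (rule ordIso_symmetric)
  ultimately have "|K \<times> {..<k}| =o |A|" by (rule ordIso_transitive)
  thus ?thesis using card_of_ordIso by auto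
qed

lemma ecf_from_b:
  assumes bF: "b_family L K k F" and infK: "infinite K" and k: "k \<ge> 1"
  shows "ecf_family L K (dom ` F)"
  unfolding ecf_family_def
proof (rule conjI)
  show "\<forall>a\<in>dom ` F. a \<subseteq> L \<and> countable a \<and> infinite a"
    using bF unfolding b_family_def partial_count_fun_def by auto
next
  show "\<forall>A. A \<subseteq> L \<and> |A| =o |K| \<longrightarrow> (\<exists>a\<in>dom ` F. infinite (A \<inter> a))"
  proof (intro allI impI)
  fix A assume AA: "A \<subseteq> L \<and> |A| =o |K|"
  then obtain g where g: "bij_betw g (K \<times> {..<k}) A" using split_bij infK k by blast
  define B where "B = (\<lambda>l::nat. g ` (K \<times> {l}))"
  have "\<forall>l<k. B l \<subseteq> L \<and> |B l| =o |K|"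
  proof (intro allI impI conjI)
    fix l assume l: "l < k"
    show "B l \<subseteq> L" using g AA l unfolding B_def bij_betw_def by auto
    have inj: "inj_on (\<lambda>e. g (e, l)) K" using g l unfolding bij_betw_def inj_on_def by auto
    have "B l = (\<lambda>e. g (e, l)) ` K" unfolding B_def by auto
    hence "bij_betw (\<lambda>e. g (e, l)) K (B l)" using inj inj_on_imp_bij_betw by metis
    hence "|K| =o |B l|" using card_of_ordIso by auto
    thus "|B l| =o |K|" by (rule ordIso_symmetric)
  qed
  moreover have "\<forall>l<k. \<forall>m<k. l \<noteq> m \<longrightarrow> B l \<inter> B m = {}"
    using g unfolding B_def bij_betw_def inj_on_def by auto
  ultimately obtain f where f: "f \<in> F" "\<forall>l<k. infinite ({x. f x = Some l} \<inter> B l)"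
    using bF unfolding b_family_def by blast
  hence inf0: "infinite ({x. f x = Some 0} \<inter> B 0)" using k by auto
  have sub: "{x. f x = Some 0} \<inter> B 0 \<subseteq> A \<inter> dom f" using g k unfolding B_def bij_betw_def by auto
  have "infinite (A \<inter> dom f)" using finite_subset[OF sub] inf0 by blast
  thus "\<exists>a\<in>dom ` F. infinite (A \<inter> a)" using f by auto
  qed
qed

lemma ecf_from_c:
  assumes cF: "c_family L K k F" and infK: "infinite K" and k: "k \<ge> 1"
  shows "ecf_family L K (dom ` F)"
  unfolding ecf_family_def
proof (rule conjI)
  show "\<forall>a\<in>dom ` F. a \<subseteq> L \<and> countable a \<and> infinite a"
    using cF unfolding c_family_def partial_count_fun_def by auto
next
  show "\<forall>A. A \<subseteq> L \<and> |A| =o |K| \<longrightarrow> (\<exists>a\<in>dom ` F. infinite (A \<inter> a))"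
  proof (intro allI impI)
  fix A assume AA: "A \<subseteq> L \<and> |A| =o |K|"
  then obtain g where g: "bij_betw g (K \<times> {..<k}) A" using split_bij infK k by blast
  define \<alpha> where "\<alpha> = (\<lambda>e l. g (e, l))"
  have "\<forall>e\<in>K. \<forall>l<k. \<alpha> e l \<in> L" using g AA unfolding \<alpha>_def bij_betw_def by auto
  moreover have "inj_on (\<lambda>(e, l). \<alpha> e l) (K \<times> {..<k})"
    using g unfolding \<alpha>_def bij_betw_def by (simp add: case_prod_eta)
  ultimately obtain f where f: "f \<in> F" "infinite {e\<in>K. \<forall>l<k. f (\<alpha> e l) = Some l}"
    using cF unfolding c_family_def by blast
  let ?E = "{e\<in>K. \<forall>l<k. f (\<alpha> e l) = Some l}"
  have k0: "0 \<in> {..<k}" using k by simp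
  have inj: "inj_on (\<lambda>e. \<alpha> e 0) ?E" using g k0 unfolding \<alpha>_def bij_betw_def inj_on_def by blast
  have "infinite ((\<lambda>e. \<alpha> e 0) ` ?E)" using f(2) finite_imageD inj by blast
  moreover have sub: "(\<lambda>e. \<alpha> e 0) ` ?E \<subseteq> A \<inter> dom f" using g k unfolding \<alpha>_def bij_betw_def by auto
  ultimately have "infinite (A \<inter> dom f)" using finite_subset[OF sub] by blast
  thus "\<exists>a\<in>dom ` F. infinite (A \<inter> a)" using f by auto
  qed
qed

primrec encl :: "('a \<times> 'a \<Rightarrow> 'a) \<Rightarrow> 'a \<Rightarrow> 'a list \<Rightarrow> 'a" where
  "encl p x0 [] = x0"
| "encl p x0 (x # xs) = p (x, encl p x0 xs)"

lemma encl_in: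
  assumes "p ` (L \<times> L) \<subseteq> L" "x0 \<in> L"
  shows "set xs \<subseteq> L \<Longrightarrow> encl p x0 xs \<in> L"
  using assms by (induction xs) auto

lemma encl_inj:
  assumes p: "inj_on p (L \<times> L)" "p ` (L \<times> L) \<subseteq> L" and x0: "x0 \<in> L"
  shows "inj_on (encl p x0) {xs. set xs \<subseteq> L \<and> length xs = n}"
proof (induction n)
  case 0
  then show ?case by (auto intro: inj_onI)
next
  case (Suc n)
  show ?case
  proof (rule inj_onI)
    fix xs ys assume xs: "xs \<in> {xs. set xs \<subseteq> L \<and> length xs = Suc n}"
      and ys: "ys \<in> {xs. set xs \<subseteq> L \<and> length xs = Suc n}"
      and eq: "encl p x0 xs = encl p x0 ys"
    obtain x xs' where xs': "xs = x # xs'" using xs by (cases xs) auto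
    obtain y ys' where ys': "ys = y # ys'" using ys by (cases ys) auto
    have inL: "x \<in> L" "y \<in> L" "encl p x0 xs' \<in> L" "encl p x0 ys' \<in> L"
      using xs ys xs' ys' encl_in[OF p(2) x0] by auto
    have "p (x, encl p x0 xs') = p (y, encl p x0 ys')" using eq xs' ys' by simp
    hence "(x, encl p x0 xs') = (y, encl p x0 ys')" using p(1) inL unfolding inj_on_def by blast
    hence "x = y" "encl p x0 xs' = encl p x0 ys'" by auto
    moreover have "xs' \<in> {xs. set xs \<subseteq> L \<and> length xs = n}" "ys' \<in> {xs. set xs \<subseteq> L \<and> length xs = n}"
      using xs ys xs' ys' by auto
    ultimately show "xs = ys" using Suc.IH xs' ys' unfolding inj_on_def by blast
  qed
qed

lemma encode_exists:
  assumes infL: "infinite L"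
  shows "\<exists>enc. (\<forall>n. inj_on enc {xs. set xs \<subseteq> L \<and> length xs = n}) \<and> (\<forall>xs. set xs \<subseteq> L \<longrightarrow> enc xs \<in> L)"
proof -
  have "|L \<times> L| =o |L|" using card_of_Times_same_infinite[OF infL] by auto
  hence "|L \<times> L| \<le>o |L|" by (rule ordIso_imp_ordLeq)
  then obtain p where p: "inj_on p (L \<times> L)" "p ` (L \<times> L) \<subseteq> L" using card_of_ordLeq[of "L \<times> L" L] by auto
  obtain x0 where x0: "x0 \<in> L" using infL by (metis finite.emptyI ex_in_conv)
  show ?thesis using encl_inj[OF p x0] encl_in[OF p(2) x0] by blast
qed

lemma D_countable:
  assumes inj: "inj_on enc {xs. set xs \<subseteq> L \<and> length xs = k}" and a: "countable a"
  shows "countable (\<Union> (set ` {xs. set xs \<subseteq> L \<and> length xs = k \<and> enc xs \<in> a}))"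
proof -
  let ?X = "{xs. set xs \<subseteq> L \<and> length xs = k \<and> enc xs \<in> a}"
  have "inj_on enc ?X" using inj by (rule inj_on_subset) auto
  moreover have "enc ` ?X \<subseteq> a" by auto
  hence "countable (enc ` ?X)" using a countable_subset by blast
  ultimately have "countable ?X" using countable_image_inj_on by blast
  thus ?thesis by (intro countable_UN) (auto simp: countable_finite)
qed

lemma hits:
  assumes ecf: "ecf_family L K P"
    and inj: "inj_on enc {xs. set xs \<subseteq> L \<and> length xs = k}"
    and encL: "\<forall>xs. set xs \<subseteq> L \<longrightarrow> enc xs \<in> L"
    and \<alpha>L: "\<forall>e\<in>K. \<forall>l<k. \<alpha> e l \<in> L"
    and \<alpha>inj: "inj_on (\<lambda>(e, l). \<alpha> e l) (K \<times> {..<k})"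
    and k: "k \<ge> 1" and S: "S \<subseteq> K" "|S| =o |K|"
  shows "\<exists>a\<in>P. infinite {e\<in>S. enc (map (\<alpha> e) [0..<k]) \<in> a}"
proof -
  define c where "c = (\<lambda>e. enc (map (\<alpha> e) [0..<k]))"
  have tin: "map (\<alpha> e) [0..<k] \<in> {xs. set xs \<subseteq> L \<and> length xs = k}" if "e \<in> K" for e
    using \<alpha>L that by auto
  have injc: "inj_on c S"
  proof (rule inj_onI)
    fix e e' assume e: "e \<in> S" and e': "e' \<in> S" and eq: "c e = c e'"
    have "map (\<alpha> e) [0..<k] = map (\<alpha> e') [0..<k]"
      using inj tin[of e] tin[of e'] e e' S(1) eq unfolding c_def inj_on_def by blast
    hence "\<alpha> e 0 = \<alpha> e' 0" using k by (metis One_nat_def Suc_le_eq diff_zero length_upt nth_map nth_upt plus_nat.add_0)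
    moreover have "(e, 0) \<in> K \<times> {..<k}" "(e', 0) \<in> K \<times> {..<k}" using e e' S(1) k by auto
    ultimately have "(e, (0::nat)) = (e', 0)" using \<alpha>inj unfolding inj_on_def by fastforce
    thus "e = e'" by simp
  qed
  define A where "A = c ` S"
  have AL: "A \<subseteq> L" unfolding A_def c_def using encL tin S(1) by blast
  have "bij_betw c S A" unfolding A_def using injc by (rule inj_on_imp_bij_betw)
  hence "|S| =o |A|" using card_of_ordIso by auto
  hence "|A| =o |K|" using S(2) ordIso_symmetric ordIso_transitive by blast
  then obtain a where a: "a \<in> P" "infinite (A \<inter> a)" using ecf AL unfolding ecf_family_def by blast
  have sub: "A \<inter> a \<subseteq> c ` {e\<in>S. c e \<in> a}" unfolding A_def by auto
  have "infinite {e\<in>S. c e \<in> a}"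
  proof
    assume "finite {e\<in>S. c e \<in> a}"
    hence "finite (c ` {e\<in>S. c e \<in> a})" by simp
    hence "finite (A \<inter> a)" using finite_subset[OF sub] by blast
    thus False using a(2) by simp
  qed
  thus ?thesis using a(1) unfolding c_def by blast
qed

lemma pigeon:
  fixes key :: "'b \<Rightarrow> 'c::countable" and K :: "'b set"
  assumes reg: "regularCard |K|" and unc: "uncountable K"
  shows "\<exists>c. |{e\<in>K. key e = c}| =o |K|"
proof (rule ccontr)
  assume H: "\<not> (\<exists>c. |{e\<in>K. key e = c}| =o |K| )"
  have less: "|{e\<in>K. key e = c}| <o |K|" for c
  proof -
    have "|{e\<in>K. key e = c}| \<le>o |K|" by (rule card_of_mono1) auto
    moreover have "\<not> |{e\<in>K. key e = c}| =o |K|" using H by auto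
    ultimately show ?thesis by (simp add: ordLeq_iff_ordLess_or_ordIso)
  qed
  have infK: "infinite K" using unc countable_finite by auto
  have Cinf: "Cinfinite |K|" unfolding cinfinite_def using infK card_of_Card_order by (simp add: Field_card_of)
  have "countable (key ` K)" by simp
  hence "|key ` K| \<le>o |UNIV::nat set|" by (rule countable_le_nat)
  hence KK: "|key ` K| <o |K|" using uncountable_nat_less[OF unc] by (rule ordLeq_ordLess_trans)
  have "|\<Union>c\<in>key ` K. {e\<in>K. key e = c}| <o |K|"
    by (rule regularCard_UNION_bound[OF Cinf reg KK less])
  moreover have "(\<Union>c\<in>key ` K. {e\<in>K. key e = c}) = K" by auto
  ultimately have "|K| <o |K|" by simp
  thus False using ordLess_irreflexive by blast
qed

lemma sep_exists:
  fixes \<phi> :: "'a \<Rightarrow> nat set" and k :: nat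
  assumes phi: "inj_on \<phi> L" and xL: "\<forall>l<k. x l \<in> L"
    and xd: "\<forall>l<k. \<forall>l'<k. l \<noteq> l' \<longrightarrow> x l \<noteq> x l'"
  shows "\<exists>n. distinct (map (\<lambda>l. map (\<lambda>i. i \<in> \<phi> (x l)) [0..<n]) [0..<k])"
proof -
  let ?sig = "\<lambda>n y. map (\<lambda>i. i \<in> \<phi> y) [0..<n]"
  let ?I = "{(l, l'). l < k \<and> l' < k \<and> l \<noteq> l'}"
  have fin: "finite ?I" by (rule finite_subset[of _ "{..<k} \<times> {..<k}"]) auto
  have ev: "\<forall>p\<in>?I. eventually (\<lambda>n. ?sig n (x (fst p)) \<noteq> ?sig n (x (snd p))) sequentially"
  proof
    fix p assume p: "p \<in> ?I"
    then obtain l l' where pl: "p = (l, l')" "l < k" "l' < k" "l \<noteq> l'" by auto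
    hence "x l \<noteq> x l'" using xd by auto
    hence "\<phi> (x l) \<noteq> \<phi> (x l')" using phi xL pl unfolding inj_on_def by auto
    then obtain i where i: "(i \<in> \<phi> (x l)) \<noteq> (i \<in> \<phi> (x l'))" by blast
    have "\<forall>n\<ge>Suc i. ?sig n (x l) \<noteq> ?sig n (x l')"
    proof (intro allI impI)
      fix n assume n: "n \<ge> Suc i"
      have "?sig n (x l) ! i \<noteq> ?sig n (x l') ! i" using n i by simp
      thus "?sig n (x l) \<noteq> ?sig n (x l')" by metis
    qed
    thus "eventually (\<lambda>n. ?sig n (x (fst p)) \<noteq> ?sig n (x (snd p))) sequentially"
      unfolding eventually_sequentially pl by auto
  qed
  have "eventually (\<lambda>n. \<forall>p\<in>?I. ?sig n (x (fst p)) \<noteq> ?sig n (x (snd p))) sequentially"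
    using eventually_ball_finite[OF fin ev] by simp
  then obtain N where N: "\<forall>p\<in>?I. ?sig N (x (fst p)) \<noteq> ?sig N (x (snd p))"
    unfolding eventually_sequentially by auto
  have "distinct (map (\<lambda>l. ?sig N (x l)) [0..<k])"
    unfolding distinct_conv_nth
  proof (intro allI impI)
    fix i j assume "i < length (map (\<lambda>l. ?sig N (x l)) [0..<k])" "j < length (map (\<lambda>l. ?sig N (x l)) [0..<k])" "i \<noteq> j"
    hence ij: "i < k" "j < k" "i \<noteq> j" by auto
    hence "(i, j) \<in> ?I" by auto
    hence "?sig N (x i) \<noteq> ?sig N (x j)" using N by fastforce
    thus "map (\<lambda>l. ?sig N (x l)) [0..<k] ! i \<noteq> map (\<lambda>l. ?sig N (x l)) [0..<k] ! j" using ij by simp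
  qed
  thus ?thesis by blast
qed

lemma caseA:
  fixes \<phi> :: "'a \<Rightarrow> nat set" and L :: "'a set" and K :: "'b set" and k :: nat
  assumes ecf: "ecf_family L K P" and reg: "regularCard |K|" and unc: "uncountable K"
    and k: "k \<ge> 1" and phi: "inj_on \<phi> L" and infP: "infinite P"
    and inj: "inj_on enc {xs. set xs \<subseteq> L \<and> length xs = k}"
    and encL: "\<forall>xs. set xs \<subseteq> L \<longrightarrow> enc xs \<in> L"
  shows "\<exists>F. c_family L K k F \<and> |F| \<le>o |P|"
proof -
  define D where "D = (\<lambda>a. \<Union> (set ` {xs. set xs \<subseteq> L \<and> length xs = k \<and> enc xs \<in> a}))"
  define sig where "sig = (\<lambda>n y. map (\<lambda>i. i \<in> \<phi> y) [0..<n])"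
  define fA where "fA = (\<lambda>a n ss x. if x \<in> D a \<and> sig n x \<in> set ss then Some (LEAST l. sig n x = ss ! l) else None)"
  define F where "F = {f. \<exists>a\<in>P. \<exists>n ss. f = fA a n ss \<and> partial_count_fun L k f}"
  have DL: "D a \<subseteq> L" for a unfolding D_def by auto
  have Dc: "countable (D a)" if "a \<in> P" for a
  proof -
    have "countable a" using ecf that unfolding ecf_family_def by auto
    thus ?thesis unfolding D_def by (rule D_countable[OF inj])
  qed
  have card: "|F| \<le>o |P|"
  proof -
    have "F \<subseteq> (\<lambda>(a, n, ss). fA a n ss) ` (P \<times> (UNIV :: (nat \<times> bool list list) set))"
    proof
      fix f assume "f \<in> F"
      then obtain a n ss where "a \<in> P" "f = fA a n ss" unfolding F_def by auto
      thus "f \<in> (\<lambda>(a, n, ss). fA a n ss) ` (P \<times> (UNIV :: (nat \<times> bool list list) set))"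
        by (intro image_eqI[where x="(a, n, ss)"]) auto
    qed
    hence "|F| \<le>o |(\<lambda>(a, n, ss). fA a n ss) ` (P \<times> (UNIV :: (nat \<times> bool list list) set))|"
      by (rule card_of_mono1)
    moreover have "|(\<lambda>(a, n, ss). fA a n ss) ` (P \<times> (UNIV :: (nat \<times> bool list list) set))| \<le>o |P \<times> (UNIV :: (nat \<times> bool list list) set)|"
      by (rule card_of_image)
    moreover have PU: "|P \<times> (UNIV :: (nat \<times> bool list list) set)| =o |P|"
    proof -
      have "|UNIV :: (nat \<times> bool list list) set| \<le>o |UNIV::nat set|" by (rule countable_le_nat) simp
      moreover have "|UNIV::nat set| \<le>o |P|" using infP infinite_iff_card_of_nat by auto
      ultimately have "|UNIV :: (nat \<times> bool list list) set| \<le>o |P|" by (rule ordLeq_transitive)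
      thus ?thesis using card_of_Times_infinite[OF infP] by auto
    qed
    ultimately have "|F| \<le>o |P \<times> (UNIV :: (nat \<times> bool list list) set)|" using ordLeq_transitive by blast
    thus ?thesis using PU by (rule ordLeq_ordIso_trans)
  qed
  have cF: "c_family L K k F"
    unfolding c_family_def
  proof (rule conjI)
    show "\<forall>f\<in>F. partial_count_fun L k f" unfolding F_def by auto
  next
    show "\<forall>\<alpha>. (\<forall>e\<in>K. \<forall>l<k. \<alpha> e l \<in> L) \<and> inj_on (\<lambda>(e, l). \<alpha> e l) (K \<times> {..<k}) \<longrightarrow>
        (\<exists>f\<in>F. infinite {e \<in> K. \<forall>l<k. f (\<alpha> e l) = Some l})"
    proof (intro allI impI)
      fix \<alpha> :: "'b \<Rightarrow> nat \<Rightarrow> 'a"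
      assume asm: "(\<forall>e\<in>K. \<forall>l<k. \<alpha> e l \<in> L) \<and> inj_on (\<lambda>(e, l). \<alpha> e l) (K \<times> {..<k})"
      hence \<alpha>L: "\<forall>e\<in>K. \<forall>l<k. \<alpha> e l \<in> L" and \<alpha>inj: "inj_on (\<lambda>(e, l). \<alpha> e l) (K \<times> {..<k})" by auto
      have exn: "\<exists>n. distinct (map (\<lambda>l. sig n (\<alpha> e l)) [0..<k])" if e: "e \<in> K" for e
      proof -
        have "\<forall>l<k. \<forall>l'<k. l \<noteq> l' \<longrightarrow> \<alpha> e l \<noteq> \<alpha> e l'"
          using \<alpha>inj e unfolding inj_on_def by fastforce
        moreover have "\<forall>l<k. \<alpha> e l \<in> L" using \<alpha>L e by auto
        ultimately show ?thesis unfolding sig_def using sep_exists[OF phi] by simp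
      qed
      define nE where "nE = (\<lambda>e. SOME n. distinct (map (\<lambda>l. sig n (\<alpha> e l)) [0..<k]))"
      have nE: "distinct (map (\<lambda>l. sig (nE e) (\<alpha> e l)) [0..<k])" if "e \<in> K" for e
        unfolding nE_def using someI_ex[OF exn[OF that]] .
      define key where "key = (\<lambda>e. (nE e, map (\<lambda>l. sig (nE e) (\<alpha> e l)) [0..<k]))"
      obtain c where c: "|{e\<in>K. key e = c}| =o |K|" using pigeon[OF reg unc, of key] by blast
      obtain n ss where c': "c = (n, ss)" by (cases c)
      define S where "S = {e\<in>K. key e = c}"
      have "S \<subseteq> K" unfolding S_def by auto
      moreover have "|S| =o |K|" using c unfolding S_def .
      ultimately obtain a where a: "a \<in> P" and Hinf: "infinite {e\<in>S. enc (map (\<alpha> e) [0..<k]) \<in> a}"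
        using hits[OF ecf inj encL \<alpha>L \<alpha>inj k] by metis
      define H where "H = {e\<in>S. enc (map (\<alpha> e) [0..<k]) \<in> a}"
      have HK: "H \<subseteq> K" unfolding H_def S_def by auto
      have ssdef: "ss = map (\<lambda>l. sig n (\<alpha> e l)) [0..<k]" and nn: "nE e = n" if "e \<in> H" for e
        using that c' unfolding H_def S_def key_def by auto
      have ssd: "distinct ss" and ssl: "length ss = k" if Hne0: "H \<noteq> {}"
      proof -
        obtain e where "e \<in> H" using Hne0 by blast
        thus "distinct ss" "length ss = k" using nE[of e] HK ssdef nn by auto
      qed
      have Hne: "H \<noteq> {}" using Hinf unfolding H_def by (metis finite.emptyI)
      define f where "f = fA a n ss"
      have fval: "f (\<alpha> e l) = Some l" if e: "e \<in> H" and l: "l < k" for e l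
      proof -
        have eK: "e \<in> K" using e HK by auto
        have "map (\<alpha> e) [0..<k] \<in> {xs. set xs \<subseteq> L \<and> length xs = k \<and> enc xs \<in> a}"
          using e \<alpha>L eK unfolding H_def by auto
        moreover have "\<alpha> e l \<in> set (map (\<alpha> e) [0..<k])" using l by auto
        ultimately have inD: "\<alpha> e l \<in> D a" unfolding D_def by blast
        have sl: "sig n (\<alpha> e l) = ss ! l" using ssdef[OF e] l by simp
        have inss: "sig n (\<alpha> e l) \<in> set ss" using sl l ssl[OF Hne] by simp
        have "(LEAST l'. sig n (\<alpha> e l) = ss ! l') = l"
        proof (rule Least_equality)
          show "sig n (\<alpha> e l) = ss ! l" by (rule sl)
        next
          fix y assume "sig n (\<alpha> e l) = ss ! y"
          hence y: "ss ! l = ss ! y" using sl by simp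
          show "l \<le> y"
          proof (rule ccontr)
            assume "\<not> l \<le> y"
            hence "y < l" by simp
            hence "y < length ss" "l < length ss" using l ssl[OF Hne] by auto
            hence "l = y" using y nth_eq_iff_index_eq[OF ssd[OF Hne]] by simp
            thus False using \<open>y < l\<close> by simp
          qed
        qed
        thus ?thesis unfolding f_def fA_def using inD inss by simp
      qed
      have pcf: "partial_count_fun L k f"
        unfolding partial_count_fun_def
      proof (intro conjI)
        have domD: "dom f \<subseteq> D a" unfolding f_def fA_def dom_def by auto
        thus "dom f \<subseteq> L" using DL by blast
        show "countable (dom f)" using domD Dc[OF a] countable_subset by blast
        show "ran f \<subseteq> {..<k}"
        proof
          fix v assume "v \<in> ran f"
          then obtain x where x: "f x = Some v" unfolding ran_def by auto
          hence xs: "sig n x \<in> set ss" and v: "v = (LEAST l. sig n x = ss ! l)"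
            unfolding f_def fA_def by (auto split: if_splits)
          obtain i where i: "i < length ss" "ss ! i = sig n x" using xs unfolding in_set_conv_nth by auto
          have "v \<le> i" unfolding v using i(2) by (intro Least_le) simp
          thus "v \<in> {..<k}" using i(1) ssl[OF Hne] by simp
        qed
        have k0: "0 < k" using k by simp
        have "(\<lambda>e. \<alpha> e 0) ` H \<subseteq> dom f" using fval k0 by blast
        moreover have "inj_on (\<lambda>e. \<alpha> e 0) H"
        proof (rule inj_onI)
          fix e e' assume "e \<in> H" "e' \<in> H" "\<alpha> e 0 = \<alpha> e' 0"
          moreover have "(e, 0) \<in> K \<times> {..<k}" "(e', 0) \<in> K \<times> {..<k}" using \<open>e \<in> H\<close> \<open>e' \<in> H\<close> HK k0 by auto
          ultimately have "(e, (0::nat)) = (e', 0)" using \<alpha>inj unfolding inj_on_def by fastforce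
          thus "e = e'" by simp
        qed
        hence "infinite ((\<lambda>e. \<alpha> e 0) ` H)" using Hinf finite_imageD unfolding H_def by blast
        ultimately show "infinite (dom f)" using finite_subset by auto
      qed
      have "f \<in> F" unfolding F_def f_def using a pcf f_def by blast
      moreover have "H \<subseteq> {e \<in> K. \<forall>l<k. f (\<alpha> e l) = Some l}" using fval HK by blast
      hence "infinite {e \<in> K. \<forall>l<k. f (\<alpha> e l) = Some l}" using Hinf finite_subset unfolding H_def by blast
      ultimately show "\<exists>f\<in>F. infinite {e \<in> K. \<forall>l<k. f (\<alpha> e l) = Some l}" by blast
    qed
  qed
  show ?thesis using cF card by blast
qed

lemma caseB:
  fixes L :: "'a set" and K :: "'b set" and k :: nat
  assumes ecf: "ecf_family L K P" and k: "k \<ge> 1" and infP: "infinite P"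
    and PowP: "|UNIV :: nat set set| \<le>o |P|"
    and inj: "inj_on enc {xs. set xs \<subseteq> L \<and> length xs = k}"
    and encL: "\<forall>xs. set xs \<subseteq> L \<longrightarrow> enc xs \<in> L"
  shows "\<exists>F. c_family L K k F \<and> |F| \<le>o |P|"
proof -
  define D where "D = (\<lambda>a. \<Union> (set ` {xs. set xs \<subseteq> L \<and> length xs = k \<and> enc xs \<in> a}))"
  define G where "G = (\<lambda>a. {f. dom f \<subseteq> D a \<and> partial_count_fun L k f})"
  define F where "F = (\<Union>a\<in>P. G a)"
  have DL: "D a \<subseteq> L" for a unfolding D_def by auto
  have Dc: "countable (D a)" if "a \<in> P" for a
  proof -
    have "countable a" using ecf that unfolding ecf_family_def by auto
    thus ?thesis unfolding D_def by (rule D_countable[OF inj])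
  qed
  have Gle: "|G a| \<le>o |P|" if a: "a \<in> P" for a
  proof -
    have "countable (D a \<times> (UNIV::nat set))" using Dc[OF a] by simp
    then obtain u :: "'a \<times> nat \<Rightarrow> nat" where u: "inj_on u (D a \<times> (UNIV::nat set))"
      unfolding countable_def by blast
    define gr where "gr = (\<lambda>f::'a \<Rightarrow> nat option. {(x, l). f x = Some l})"
    have grsub: "gr f \<subseteq> D a \<times> UNIV" if "f \<in> G a" for f
      using that unfolding gr_def G_def dom_def by auto
    have "inj_on (\<lambda>f. u ` gr f) (G a)"
    proof (rule inj_onI)
      fix f g assume f: "f \<in> G a" and g: "g \<in> G a" and eq: "u ` gr f = u ` gr g"
      have "gr f = gr g" using inj_on_image_eq_iff[OF u grsub[OF f] grsub[OF g]] eq by simp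
      show "f = g"
      proof
        fix x show "f x = g x"
        proof (cases "f x")
          case None
          then show ?thesis using \<open>gr f = gr g\<close> unfolding gr_def
            by (metis (mono_tags, lifting) case_prodI mem_Collect_eq not_None_eq old.prod.case)
        next
          case (Some v)
          then show ?thesis using \<open>gr f = gr g\<close> unfolding gr_def
            by (metis (mono_tags, lifting) case_prodI mem_Collect_eq old.prod.case)
        qed
      qed
    qed
    hence "|G a| \<le>o |UNIV :: nat set set|" using card_of_ordLeq[of "G a" "UNIV :: nat set set"] by blast
    thus ?thesis using PowP by (rule ordLeq_transitive)
  qed
  have card: "|F| \<le>o |P|" unfolding F_def
    by (rule card_of_UNION_ordLeq_infinite[OF infP]) (auto intro: ordLeq_refl card_of_Card_order Gle)
  have cF: "c_family L K k F"
    unfolding c_family_def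
  proof (rule conjI)
    show "\<forall>f\<in>F. partial_count_fun L k f" unfolding F_def G_def by auto
  next
    show "\<forall>\<alpha>. (\<forall>e\<in>K. \<forall>l<k. \<alpha> e l \<in> L) \<and> inj_on (\<lambda>(e, l). \<alpha> e l) (K \<times> {..<k}) \<longrightarrow>
        (\<exists>f\<in>F. infinite {e \<in> K. \<forall>l<k. f (\<alpha> e l) = Some l})"
    proof (intro allI impI)
      fix \<alpha> :: "'b \<Rightarrow> nat \<Rightarrow> 'a"
      assume asm: "(\<forall>e\<in>K. \<forall>l<k. \<alpha> e l \<in> L) \<and> inj_on (\<lambda>(e, l). \<alpha> e l) (K \<times> {..<k})"
      hence \<alpha>L: "\<forall>e\<in>K. \<forall>l<k. \<alpha> e l \<in> L" and \<alpha>inj: "inj_on (\<lambda>(e, l). \<alpha> e l) (K \<times> {..<k})" by auto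
      have "|K| =o |K|" by (rule ordIso_refl[OF card_of_Card_order])
      then obtain a where a: "a \<in> P" and Hinf: "infinite {e\<in>K. enc (map (\<alpha> e) [0..<k]) \<in> a}"
        using hits[OF ecf inj encL \<alpha>L \<alpha>inj k subset_refl] by metis
      define H where "H = {e\<in>K. enc (map (\<alpha> e) [0..<k]) \<in> a}"
      have HK: "H \<subseteq> K" unfolding H_def by auto
      have inD: "\<alpha> e l \<in> D a" if e: "e \<in> H" and l: "l < k" for e l
      proof -
        have "map (\<alpha> e) [0..<k] \<in> {xs. set xs \<subseteq> L \<and> length xs = k \<and> enc xs \<in> a}"
          using e \<alpha>L unfolding H_def by auto
        moreover have "\<alpha> e l \<in> set (map (\<alpha> e) [0..<k])" using l by auto
        ultimately show ?thesis unfolding D_def by blast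
      qed
      define f where "f = (\<lambda>x. if \<exists>e\<in>H. \<exists>l<k. x = \<alpha> e l then Some (SOME l. l < k \<and> (\<exists>e\<in>H. x = \<alpha> e l)) else None)"
      have fval: "f (\<alpha> e l) = Some l" if e: "e \<in> H" and l: "l < k" for e l
      proof -
        have ex: "\<exists>l'. l' < k \<and> (\<exists>e'\<in>H. \<alpha> e l = \<alpha> e' l')" using e l by blast
        define l' where "l' = (SOME l'. l' < k \<and> (\<exists>e'\<in>H. \<alpha> e l = \<alpha> e' l'))"
        have "l' < k \<and> (\<exists>e'\<in>H. \<alpha> e l = \<alpha> e' l')" unfolding l'_def by (rule someI_ex[OF ex])
        then obtain e' where l': "l' < k" "e' \<in> H" "\<alpha> e l = \<alpha> e' l'" by blast
        have "(e, l) \<in> K \<times> {..<k}" "(e', l') \<in> K \<times> {..<k}" using e l l' HK by auto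
        hence "(e, l) = (e', l')" using \<alpha>inj l'(3) unfolding inj_on_def by fastforce
        hence "l' = l" by simp
        moreover have "f (\<alpha> e l) = Some l'" unfolding f_def l'_def using e l by auto
        ultimately show ?thesis by simp
      qed
      have pcf: "partial_count_fun L k f"
        unfolding partial_count_fun_def
      proof (intro conjI)
        have domD: "dom f \<subseteq> D a"
        proof
          fix x assume "x \<in> dom f"
          then obtain e l where "e \<in> H" "l < k" "x = \<alpha> e l" unfolding f_def dom_def by (auto split: if_splits)
          thus "x \<in> D a" using inD by blast
        qed
        thus "dom f \<subseteq> L" using DL by blast
        show "countable (dom f)" using domD Dc[OF a] countable_subset by blast
        show "ran f \<subseteq> {..<k}"
        proof
          fix v assume "v \<in> ran f"
          then obtain x where x: "f x = Some v" unfolding ran_def by auto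
          hence ex: "\<exists>l. l < k \<and> (\<exists>e\<in>H. x = \<alpha> e l)" and v: "v = (SOME l. l < k \<and> (\<exists>e\<in>H. x = \<alpha> e l))"
            unfolding f_def by (auto split: if_splits)
          have "v < k \<and> (\<exists>e\<in>H. x = \<alpha> e v)" unfolding v by (rule someI_ex[OF ex])
          thus "v \<in> {..<k}" by simp
        qed
        have k0: "0 < k" using k by simp
        have "(\<lambda>e. \<alpha> e 0) ` H \<subseteq> dom f" using fval k0 by blast
        moreover have "inj_on (\<lambda>e. \<alpha> e 0) H"
        proof (rule inj_onI)
          fix e e' assume "e \<in> H" "e' \<in> H" "\<alpha> e 0 = \<alpha> e' 0"
          moreover have "(e, 0) \<in> K \<times> {..<k}" "(e', 0) \<in> K \<times> {..<k}" using \<open>e \<in> H\<close> \<open>e' \<in> H\<close> HK k0 by auto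
          ultimately have "(e, (0::nat)) = (e', 0)" using \<alpha>inj unfolding inj_on_def by fastforce
          thus "e = e'" by simp
        qed
        hence "infinite ((\<lambda>e. \<alpha> e 0) ` H)" using Hinf finite_imageD unfolding H_def by blast
        ultimately show "infinite (dom f)" using finite_subset by auto
      qed
      have domD': "dom f \<subseteq> D a"
      proof
        fix x assume "x \<in> dom f"
        then obtain e l where "e \<in> H" "l < k" "x = \<alpha> e l" unfolding f_def dom_def by (auto split: if_splits)
        thus "x \<in> D a" using inD by blast
      qed
      have "f \<in> F" unfolding F_def G_def using a pcf domD' by blast
      moreover have "H \<subseteq> {e \<in> K. \<forall>l<k. f (\<alpha> e l) = Some l}" using fval HK by blast
      hence "infinite {e \<in> K. \<forall>l<k. f (\<alpha> e l) = Some l}" using Hinf finite_subset unfolding H_def by blast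
      ultimately show "\<exists>f\<in>F. infinite {e \<in> K. \<forall>l<k. f (\<alpha> e l) = Some l}" by blast
    qed
  qed
  show ?thesis using cF card by blast
qed

lemma b_from_c:
  fixes L :: "'a set" and K :: "'b set" and k :: nat
  assumes cF: "c_family L K k F"
  shows "b_family L K k {f\<in>F. \<forall>l<k. infinite {x. f x = Some l}}"
  unfolding b_family_def
proof (intro conjI)
  show "\<forall>f\<in>{f \<in> F. \<forall>l<k. infinite {x. f x = Some l}}. partial_count_fun L k f"
    using cF unfolding c_family_def by auto
  show "\<forall>f\<in>{f \<in> F. \<forall>l<k. infinite {x. f x = Some l}}. \<forall>l<k. infinite {x. f x = Some l}" by auto
  show "\<forall>A. (\<forall>l<k. A l \<subseteq> L \<and> |A l| =o |K| ) \<and> (\<forall>l<k. \<forall>m<k. l \<noteq> m \<longrightarrow> A l \<inter> A m = {}) \<longrightarrow>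
        (\<exists>f\<in>{f \<in> F. \<forall>l<k. infinite {x. f x = Some l}}. \<forall>l<k. infinite ({x. f x = Some l} \<inter> A l))"
  proof (intro allI impI)
    fix A :: "nat \<Rightarrow> 'a set"
    assume asm: "(\<forall>l<k. A l \<subseteq> L \<and> |A l| =o |K| ) \<and> (\<forall>l<k. \<forall>m<k. l \<noteq> m \<longrightarrow> A l \<inter> A m = {})"
    have "\<forall>l. \<exists>g. l < k \<longrightarrow> bij_betw g K (A l)"
    proof
      fix l show "\<exists>g. l < k \<longrightarrow> bij_betw g K (A l)"
      proof (cases "l < k")
        case True
        hence "|A l| =o |K|" using asm by simp
        hence "|K| =o |A l|" by (rule ordIso_symmetric)
        thus ?thesis using card_of_ordIso by blast
      qed simp
    qed
    then obtain G where G: "\<And>l. l < k \<Longrightarrow> bij_betw (G l) K (A l)" by (metis choice)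
    define \<alpha> where "\<alpha> = (\<lambda>e l. G l e)"
    have \<alpha>A: "\<alpha> e l \<in> A l" if "e \<in> K" "l < k" for e l
      using G[OF that(2)] that(1) unfolding \<alpha>_def bij_betw_def by auto
    have \<alpha>L: "\<forall>e\<in>K. \<forall>l<k. \<alpha> e l \<in> L" using \<alpha>A asm by auto
    moreover have \<alpha>inj: "inj_on (\<lambda>(e, l). \<alpha> e l) (K \<times> {..<k})"
    proof (rule inj_onI)
      fix p q assume p: "p \<in> K \<times> {..<k}" and q: "q \<in> K \<times> {..<k}"
        and eq: "(\<lambda>(e, l). \<alpha> e l) p = (\<lambda>(e, l). \<alpha> e l) q"
      obtain e l where pe: "p = (e, l)" "e \<in> K" "l < k" using p by auto
      obtain e' l' where qe: "q = (e', l')" "e' \<in> K" "l' < k" using q by auto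
      have eq': "\<alpha> e l = \<alpha> e' l'" using eq pe qe by simp
      have "l = l'"
      proof (rule ccontr)
        assume "l \<noteq> l'"
        hence "A l \<inter> A l' = {}" using asm pe qe by simp
        moreover have "\<alpha> e l \<in> A l" by (rule \<alpha>A[OF pe(2,3)])
        moreover have "\<alpha> e l \<in> A l'" unfolding eq' by (rule \<alpha>A[OF qe(2,3)])
        ultimately show False by auto
      qed
      moreover have "e = e'"
      proof -
        have "inj_on (G l) K" using G[OF pe(3)] unfolding bij_betw_def by simp
        moreover have "G l e = G l e'" using eq' \<open>l = l'\<close> unfolding \<alpha>_def by simp
        ultimately show ?thesis using pe(2) qe(2) unfolding inj_on_def by blast
      qed
      ultimately show "p = q" using pe qe by simp
    qed
    have cF2: "\<forall>\<alpha>. (\<forall>e\<in>K. \<forall>l<k. \<alpha> e l \<in> L) \<and> inj_on (\<lambda>(e, l). \<alpha> e l) (K \<times> {..<k}) \<longrightarrow>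
        (\<exists>f\<in>F. infinite {e \<in> K. \<forall>l<k. f (\<alpha> e l) = Some l})"
      using cF unfolding c_family_def by (rule conjunct2)
    obtain f where f: "f \<in> F" and Einf: "infinite {e\<in>K. \<forall>l<k. f (\<alpha> e l) = Some l}"
      using cF2[rule_format, OF conjI[OF \<alpha>L \<alpha>inj]] by blast
    define E where "E = {e\<in>K. \<forall>l<k. f (\<alpha> e l) = Some l}"
    have inf: "infinite ({x. f x = Some l} \<inter> A l)" if l: "l < k" for l
    proof -
      have sub: "(\<lambda>e. \<alpha> e l) ` E \<subseteq> {x. f x = Some l} \<inter> A l" using \<alpha>A l unfolding E_def by auto
      moreover have "inj_on (\<lambda>e. \<alpha> e l) E"
        using G[OF l] unfolding E_def \<alpha>_def bij_betw_def inj_on_def by auto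
      hence "infinite ((\<lambda>e. \<alpha> e l) ` E)" using Einf finite_imageD unfolding E_def by blast
      ultimately show ?thesis using finite_subset[OF sub] by blast
    qed
    have "f \<in> {f \<in> F. \<forall>l<k. infinite {x. f x = Some l}}"
    proof -
      have "infinite {x. f x = Some l}" if "l < k" for l
        using inf[OF that] by (meson finite_Int)
      thus ?thesis using f by blast
    qed
    thus "\<exists>f\<in>{f \<in> F. \<forall>l<k. infinite {x. f x = Some l}}. \<forall>l<k. infinite ({x. f x = Some l} \<inter> A l)"
      using inf by blast
  qed
qed

lemma ecf_nonempty:
  fixes L :: "'a set" and K :: "'b set"
  assumes infK: "infinite K"
  shows "ecf_family L K {a. a \<subseteq> L \<and> countable a \<and> infinite a}"
  unfolding ecf_family_def
proof (rule conjI)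
  show "\<forall>a\<in>{a. a \<subseteq> L \<and> countable a \<and> infinite a}. a \<subseteq> L \<and> countable a \<and> infinite a" by simp
  show "\<forall>A. A \<subseteq> L \<and> |A| =o |K| \<longrightarrow> (\<exists>a\<in>{a. a \<subseteq> L \<and> countable a \<and> infinite a}. infinite (A \<inter> a))"
  proof (intro allI impI)
    fix A assume A: "A \<subseteq> L \<and> |A| =o |K|"
    have "infinite A"
    proof
      assume "finite A"
      obtain g where "bij_betw g A K" using A card_of_ordIso by blast
      hence "K = g ` A" unfolding bij_betw_def by simp
      thus False using \<open>finite A\<close> infK by simp
    qed
    then obtain h :: "nat \<Rightarrow> 'a" where h: "inj h" "range h \<subseteq> A" using infinite_countable_subset by blast
    have "range h \<subseteq> L" using h A by blast
    moreover have "countable (range h)" by simp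
    moreover have "infinite (range h)" using h(1) range_inj_infinite by blast
    moreover have "A \<inter> range h = range h" using h by blast
    ultimately show "\<exists>a\<in>{a. a \<subseteq> L \<and> countable a \<and> infinite a}. infinite (A \<inter> a)" by auto
  qed
qed

theorem claim4p13:
  fixes L :: "'a set" and K :: "'b set" and k :: nat
  assumes "regularCard |K|" and "uncountable K" and "|K| \<le>o |L|" and "k \<ge> 1"
  shows "\<exists>r :: ('a set \<times> 'a set) set.
           mincard_is {P. ecf_family L K P} r \<and>
           mincard_is {F. b_family L K k F} r \<and>
           mincard_is {F. c_family L K k F} r"
proof -
  note reg = assms(1) and unc = assms(2) and KL = assms(3) and k = assms(4)
  have infK: "infinite K" using unc countable_finite by auto
  have uL: "uncountable L" using uncountable_mono_card[OF unc KL] .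
  have infL: "infinite L" using uL countable_finite by auto
  have "{P. ecf_family L K P} \<noteq> {}" using ecf_nonempty[OF infK] by blast
  then obtain P0 where P0: "ecf_family L K P0" and P0min: "\<And>P. ecf_family L K P \<Longrightarrow> |P0| \<le>o |P|"
    using min_exists[of "{P. ecf_family L K P}"] by auto
  have LP0: "|L| \<le>o |P0|" by (rule ecf_big[OF P0 unc KL])
  have infP0: "infinite P0"
  proof -
    have "|UNIV::nat set| \<le>o |L|" using infL infinite_iff_card_of_nat by auto
    hence "|UNIV::nat set| \<le>o |P0|" using LP0 by (rule ordLeq_transitive)
    thus ?thesis using infinite_iff_card_of_nat by auto
  qed
  obtain enc where encinj: "\<forall>n. inj_on enc {xs. set xs \<subseteq> L \<and> length xs = n}"
    and encL: "\<forall>xs. set xs \<subseteq> L \<longrightarrow> enc xs \<in> L"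
    using encode_exists[OF infL] by blast
  have inj: "inj_on enc {xs. set xs \<subseteq> L \<and> length xs = k}" using encinj by blast
  have "\<exists>F. c_family L K k F \<and> |F| \<le>o |P0|"
  proof (cases "|L| \<le>o |UNIV :: nat set set|")
    case True
    then obtain \<phi> :: "'a \<Rightarrow> nat set" where "inj_on \<phi> L"
      using card_of_ordLeq[of L "UNIV :: nat set set"] by blast
    thus ?thesis using caseA[OF P0 reg unc k _ infP0 inj encL] by blast
  next
    case False
    hence "|UNIV :: nat set set| <o |L|" using not_ordLeq_iff_ordLess[OF card_of_Well_order card_of_Well_order] by blast
    hence "|UNIV :: nat set set| \<le>o |L|" by (rule ordLess_imp_ordLeq)
    hence "|UNIV :: nat set set| \<le>o |P0|" using LP0 by (rule ordLeq_transitive)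
    thus ?thesis using caseB[OF P0 k infP0 _ inj encL] by blast
  qed
  then obtain Fc where Fc: "c_family L K k Fc" and FcP: "|Fc| \<le>o |P0|" by blast
  define Fb where "Fb = {f\<in>Fc. \<forall>l<k. infinite {x. f x = Some l}}"
  have Fb: "b_family L K k Fb" unfolding Fb_def by (rule b_from_c[OF Fc])
  have FbP: "|Fb| \<le>o |P0|"
  proof -
    have "|Fb| \<le>o |Fc|" unfolding Fb_def by (rule card_of_mono1) auto
    thus ?thesis using FcP by (rule ordLeq_transitive)
  qed
  have lowb: "|P0| \<le>o |F|" if "b_family L K k F" for F
  proof -
    have "|P0| \<le>o |dom ` F|" by (rule P0min[OF ecf_from_b[OF that infK k]])
    moreover have "|dom ` F| \<le>o |F|" by (rule card_of_image)
    ultimately show ?thesis by (rule ordLeq_transitive)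
  qed
  have lowc: "|P0| \<le>o |F|" if "c_family L K k F" for F
  proof -
    have "|P0| \<le>o |dom ` F|" by (rule P0min[OF ecf_from_c[OF that infK k]])
    moreover have "|dom ` F| \<le>o |F|" by (rule card_of_image)
    ultimately show ?thesis by (rule ordLeq_transitive)
  qed
  have m1: "mincard_is {P. ecf_family L K P} |P0|"
    unfolding mincard_is_def
  proof (rule conjI)
    show "\<exists>F\<in>{P. ecf_family L K P}. |F| =o |P0|" using P0 ordIso_refl[OF card_of_Card_order] by blast
    show "\<forall>F\<in>{P. ecf_family L K P}. |P0| \<le>o |F|" using P0min by blast
  qed
  have m2: "mincard_is {F. b_family L K k F} |P0|"
    unfolding mincard_is_def
  proof (rule conjI)
    have "|Fb| =o |P0|" using FbP lowb[OF Fb] ordIso_iff_ordLeq by blast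
    thus "\<exists>F\<in>{F. b_family L K k F}. |F| =o |P0|" using Fb by blast
    show "\<forall>F\<in>{F. b_family L K k F}. |P0| \<le>o |F|" using lowb by blast
  qed
  have m3: "mincard_is {F. c_family L K k F} |P0|"
    unfolding mincard_is_def
  proof (rule conjI)
    have "|Fc| =o |P0|" using FcP lowc[OF Fc] ordIso_iff_ordLeq by blast
    thus "\<exists>F\<in>{F. c_family L K k F}. |F| =o |P0|" using Fc by blast
    show "\<forall>F\<in>{F. c_family L K k F}. |P0| \<le>o |F|" using lowc by blast
  qed
  show ?thesis using m1 m2 m3 by blast
qed
end
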